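(* Let $T$ be a tree, let $f_t$ be a token-placement of $T$ with colors $\{1,2\}$ and let $f$ be a token-placement of $T$ with the same number of color-1 tokens as $f_t$. For an edge $e=xy$ of $T$, let $T(x)$ and $T(y)$ be the components of $T-e$ containing $x$ and $y$, and let $\mathrm{diff}_f(e)=\bigl|\,|\{v\in T(x): f(v)=1\}|-|\{v\in T(x): f_t(v)=1\}|\,\bigr|$. Let $D(f)=\sum_{e\in E(T)}\mathrm{diff}_f(e)$. If $D(f)\neq 0$, then there is an edge $uv$ of $T$ such that the token-placement $f'$ obtained from $f$ by swapping the tokens on $u$ and $v$ satisfies $D(f')=D(f)-1$.
   Context: A token-placement of a graph with color set $\{1,2\}$ is a surjective map from its vertex set to $\{1,2\}$. Swapping the tokens on adjacent vertices $u,v$ turns $f$ into $f'$ with $f'(u)=f(v)$, $f'(v)=f(u)$, $f'(w)=f(w)$ otherwise. Note $\mathrm{diff}_f(e)$ does not depend on which endpoint's side is used. *)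

theory Defs
  imports Main
begin

definition simple_graph :: "'a set \<Rightarrow> ('a \<Rightarrow> 'a \<Rightarrow> bool) \<Rightarrow> bool" where
  "simple_graph V E \<longleftrightarrow> finite V \<and> (\<forall>x y. E x y \<longrightarrow> x \<in> V \<and> y \<in> V)
      \<and> (\<forall>x y. E x y \<longrightarrow> E y x) \<and> (\<forall>x. \<not> E x x)"

definition connected_graph :: "'a set \<Rightarrow> ('a \<Rightarrow> 'a \<Rightarrow> bool) \<Rightarrow> bool" where
  "connected_graph V E \<longleftrightarrow> (\<forall>x\<in>V. \<forall>y\<in>V. E\<^sup>*\<^sup>* x y)"

definition is_cycle :: "('a \<Rightarrow> 'a \<Rightarrow> bool) \<Rightarrow> 'a list \<Rightarrow> bool" where
  "is_cycle E cs \<longleftrightarrow> length cs \<ge> 3 \<and> distinct cs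
      \<and> (\<forall>i. Suc i < length cs \<longrightarrow> E (cs ! i) (cs ! Suc i))
      \<and> E (last cs) (hd cs)"

definition is_tree :: "'a set \<Rightarrow> ('a \<Rightarrow> 'a \<Rightarrow> bool) \<Rightarrow> bool" where
  "is_tree V E \<longleftrightarrow> simple_graph V E \<and> V \<noteq> {} \<and> connected_graph V E
      \<and> (\<nexists>cs. is_cycle E cs)"

definition edges :: "('a \<Rightarrow> 'a \<Rightarrow> bool) \<Rightarrow> 'a set set" where
  "edges E = {{x, y} | x y. E x y}"

definition token_placement :: "'a set \<Rightarrow> ('a \<Rightarrow> nat) \<Rightarrow> bool" where
  "token_placement V f \<longleftrightarrow> f ` V = {1, 2}"

definition swap_tokens :: "('a \<Rightarrow> nat) \<Rightarrow> 'a \<Rightarrow> 'a \<Rightarrow> ('a \<Rightarrow> nat)" where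
  "swap_tokens f u v = f(u := f v, v := f u)"

definition comp_minus_edge :: "'a set \<Rightarrow> ('a \<Rightarrow> 'a \<Rightarrow> bool) \<Rightarrow> 'a set \<Rightarrow> 'a \<Rightarrow> 'a set" where
  "comp_minus_edge V E e x = {v \<in> V. (\<lambda>a b. E a b \<and> {a, b} \<noteq> e)\<^sup>*\<^sup>* x v}"

definition ones_in :: "('a \<Rightarrow> nat) \<Rightarrow> 'a set \<Rightarrow> nat" where
  "ones_in f S = card {v \<in> S. f v = 1}"

text \<open>diff_f(e), computed from the side of an (arbitrarily chosen) endpoint x of e;
  by the standing remark this does not depend on the choice.\<close>
definition diff_edge :: "'a set \<Rightarrow> ('a \<Rightarrow> 'a \<Rightarrow> bool) \<Rightarrow> ('a \<Rightarrow> nat) \<Rightarrow> ('a \<Rightarrow> nat) \<Rightarrow> 'a set \<Rightarrow> int" where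
  "diff_edge V E ft f e =
     (let x = (SOME x. x \<in> e); S = comp_minus_edge V E e x
      in \<bar>int (ones_in f S) - int (ones_in ft S)\<bar>)"

definition D_val :: "'a set \<Rightarrow> ('a \<Rightarrow> 'a \<Rightarrow> bool) \<Rightarrow> ('a \<Rightarrow> nat) \<Rightarrow> ('a \<Rightarrow> nat) \<Rightarrow> int" where
  "D_val V E ft f = (\<Sum>e\<in>edges E. diff_edge V E ft f e)"

end

theory Submission
  imports Defs
begin

definition walk :: "('a \<Rightarrow> 'a \<Rightarrow> bool) \<Rightarrow> 'a list \<Rightarrow> bool" where
  "walk R ps \<longleftrightarrow> (\<forall>i. Suc i < length ps \<longrightarrow> R (ps ! i) (ps ! Suc i))"

lemma simple_path:
  assumes "R\<^sup>*\<^sup>* x y"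
  shows "\<exists>ps. ps \<noteq> [] \<and> hd ps = x \<and> last ps = y \<and> distinct ps \<and> walk R ps"
  using assms
proof (induction rule: rtranclp_induct)
  case base
  show ?case by (rule exI[of _ "[x]"]) (simp add: walk_def)
next
  case (step y z)
  then obtain ps where ps: "ps \<noteq> []" "hd ps = x" "last ps = y" "distinct ps" "walk R ps" by blast
  show ?case
  proof (cases "z \<in> set ps")
    case True
    then obtain i where i: "i < length ps" "ps ! i = z" by (meson in_set_conv_nth)
    let ?qs = "take (Suc i) ps"
    have "?qs \<noteq> []" using ps(1) by simp
    moreover have "hd ?qs = x" using ps by (simp add: hd_take)
    moreover have "last ?qs = z"
    proof -
      have "?qs = take i ps @ [ps!i]" by (simp add: take_Suc_conv_app_nth i(1))
      then show ?thesis using i(2) by simp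
    qed
    moreover have "distinct ?qs" using ps(4) by simp
    moreover have "walk R ?qs" using ps(5) i unfolding walk_def by auto
    ultimately show ?thesis by blast
  next
    case False
    let ?qs = "ps @ [z]"
    have "walk R ?qs" unfolding walk_def
    proof (intro allI impI)
      fix j assume j: "Suc j < length ?qs"
      show "R (?qs ! j) (?qs ! Suc j)"
      proof (cases "Suc j < length ps")
        case True
        then show ?thesis using ps(5) by (simp add: walk_def nth_append)
      next
        case False
        then have "Suc j = length ps" using j by simp
        then have jj: "j = length ps - 1" by simp
        then have "?qs ! j = y" "?qs ! Suc j = z" using ps(1,3) \<open>Suc j = length ps\<close>
          by (auto simp: nth_append last_conv_nth)
        then show ?thesis using step(2) by simp
      qed
    qed
    then show ?thesis using ps False by (intro exI[of _ ?qs]) auto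
  qed
qed

lemma card_sum: "finite S \<Longrightarrow> int (card {x\<in>S. P x}) = (\<Sum>x\<in>S. if P x then 1 else 0)"
  by (simp add: sum.inter_filter[symmetric])

locale tc =
  fixes V :: "'a set" and E :: "'a \<Rightarrow> 'a \<Rightarrow> bool"
  assumes tree: "is_tree V E"
begin

lemma finV: "finite V" using tree unfolding is_tree_def simple_graph_def by blast
lemma symE: "E x y \<Longrightarrow> E y x" using tree unfolding is_tree_def simple_graph_def by blast
lemma inV: "E x y \<Longrightarrow> x \<in> V \<and> y \<in> V" using tree unfolding is_tree_def simple_graph_def by blast
lemma irr: "\<not> E x x" using tree unfolding is_tree_def simple_graph_def by blast
lemma conn: "x \<in> V \<Longrightarrow> y \<in> V \<Longrightarrow> E\<^sup>*\<^sup>* x y" using tree unfolding is_tree_def connected_graph_def by blast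
lemma nocyc: "\<not> is_cycle E cs" using tree unfolding is_tree_def by blast

abbreviation R :: "'a set \<Rightarrow> 'a \<Rightarrow> 'a \<Rightarrow> bool" where
  "R e \<equiv> (\<lambda>a b. E a b \<and> {a, b} \<noteq> e)"

definition A where "A u v = comp_minus_edge V E {u, v} u"

lemma R_sym: "(R e)\<^sup>*\<^sup>* a b \<Longrightarrow> (R e)\<^sup>*\<^sup>* b a"
proof (induction rule: rtranclp_induct)
  case base then show ?case by simp
next
  case (step y z)
  have "R e z y" using step(2) symE by (auto simp: insert_commute)
  then show ?case using step(3) by (rule converse_rtranclp_into_rtranclp)
qed

lemma change_edge:
  assumes "(R e)\<^sup>*\<^sup>* a x" "\<not> (R e)\<^sup>*\<^sup>* a c" "c \<in> e'"
  shows "(R e')\<^sup>*\<^sup>* a x"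
  using assms(1)
proof (induction rule: rtranclp_induct)
  case base then show ?case by simp
next
  case (step y z)
  have "(R e)\<^sup>*\<^sup>* a z" using step(1,2) by (rule rtranclp.rtrancl_into_rtrancl)
  then have "{y, z} \<noteq> e'" using step(1) assms(2,3) by auto
  then have "R e' y z" using step(2) by simp
  then show ?case using step(3) rtranclp.rtrancl_into_rtrancl[of "R e'" a y z] by blast
qed

lemma sep:
  assumes "E u v"
  shows "\<not> (R {u, v})\<^sup>*\<^sup>* u v"
proof
  assume "(R {u, v})\<^sup>*\<^sup>* u v"
  from simple_path[OF this] obtain ps where ps: "ps \<noteq> []" "hd ps = u" "last ps = v" "distinct ps" "walk (R {u,v}) ps"
    by auto
  have uv: "u \<noteq> v" using assms irr by blast
  have n0: "length ps \<noteq> 0" using ps(1) by simp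
  have n1: "length ps \<noteq> 1"
  proof
    assume "length ps = 1"
    then obtain a where "ps = [a]" by (metis One_nat_def length_0_conv length_Suc_conv)
    then show False using ps(2,3) uv by simp
  qed
  have l2: "length ps \<ge> 2" using n0 n1 by linarith
  have l3: "length ps \<ge> 3"
  proof (rule ccontr)
    assume "\<not> length ps \<ge> 3"
    then have len: "length ps = 2" using l2 by simp
    have "ps ! 0 = u" using ps(1,2) by (simp add: hd_conv_nth)
    moreover have "ps ! 1 = v" using ps(1,3) len by (simp add: last_conv_nth)
    moreover have "R {u,v} (ps ! 0) (ps ! Suc 0)" using ps(5) len unfolding walk_def by auto
    ultimately show False by simp
  qed
  have w: "\<forall>i. Suc i < length ps \<longrightarrow> E (ps!i) (ps!Suc i)" using ps(5) unfolding walk_def by blast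
  have "E (last ps) (hd ps)" using ps(2,3) symE assms by simp
  then have "is_cycle E ps" unfolding is_cycle_def using w l3 ps(4) by simp
  then show False using nocyc by blast
qed

lemma A_fin: "finite (A u v)" unfolding A_def comp_minus_edge_def using finV by simp
lemma A_sub: "A u v \<subseteq> V" unfolding A_def comp_minus_edge_def by auto
lemma u_in_A: "E u v \<Longrightarrow> u \<in> A u v" unfolding A_def comp_minus_edge_def using inV by auto
lemma v_notin_A: "E u v \<Longrightarrow> v \<notin> A u v" unfolding A_def comp_minus_edge_def using sep by auto

lemma A_swap_eq: "comp_minus_edge V E {u, v} v = A v u"
  unfolding A_def by (simp add: insert_commute)

lemma A_disj: "E u v \<Longrightarrow> A u v \<inter> A v u = {}"
proof (rule ccontr)
  assume e: "E u v" and "A u v \<inter> A v u \<noteq> {}"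
  then obtain x where "(R {u,v})\<^sup>*\<^sup>* u x" "(R {u,v})\<^sup>*\<^sup>* v x"
    unfolding A_def comp_minus_edge_def by (auto simp: insert_commute)
  then have "(R {u,v})\<^sup>*\<^sup>* u v" using R_sym by (meson rtranclp_trans)
  then show False using sep e by blast
qed

lemma A_union: assumes e: "E u v" shows "A u v \<union> A v u = V"
proof
  show "A u v \<union> A v u \<subseteq> V" using A_sub by auto
  show "V \<subseteq> A u v \<union> A v u"
  proof
    fix x assume "x \<in> V"
    then have "E\<^sup>*\<^sup>* u x" using conn inV e by blast
    then show "x \<in> A u v \<union> A v u"
    proof (induction rule: rtranclp_induct)
      case base then show ?case using u_in_A e by auto
    next
      case (step y z)
      show ?case
      proof (cases "{y, z} = {u, v}")
        case True
        then have "z = u \<or> z = v" by auto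
        then show ?thesis using u_in_A[OF e] u_in_A[OF symE[OF e]] by auto
      next
        case False
        then have r: "R {u,v} y z" using step(2) by simp
        have zV: "z \<in> V" using step(2) inV by blast
        from step(3) show ?thesis
        proof
          assume "y \<in> A u v"
          then show ?thesis using r zV unfolding A_def comp_minus_edge_def
            by (auto intro: rtranclp.rtrancl_into_rtrancl)
        next
          assume "y \<in> A v u"
          then show ?thesis using r zV unfolding A_def comp_minus_edge_def
            by (auto simp: insert_commute intro: rtranclp.rtrancl_into_rtrancl)
        qed
      qed
    qed
  qed
qed

lemma closure:
  assumes "E a b" "{a, b} \<noteq> e"
  shows "a \<in> comp_minus_edge V E e x \<longleftrightarrow> b \<in> comp_minus_edge V E e x"
proof -
  have r1: "R e a b" using assms by simp
  have r2: "R e b a" using assms symE by (auto simp: insert_commute)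
  show ?thesis using r1 r2 inV assms(1) unfolding comp_minus_edge_def
    by (auto intro: rtranclp.rtrancl_into_rtrancl)
qed

lemma decomp:
  assumes e: "E u v"
  shows "A u v = insert u (\<Union>w\<in>{w. E u w \<and> w \<noteq> v}. A w u)"
proof
  show "A u v \<subseteq> insert u (\<Union>w\<in>{w. E u w \<and> w \<noteq> v}. A w u)"
  proof
    fix x assume "x \<in> A u v"
    then have xV: "x \<in> V" and p0: "(R {u,v})\<^sup>*\<^sup>* u x" unfolding A_def comp_minus_edge_def by auto
    from p0 have "x = u \<or> (\<exists>w. E u w \<and> w \<noteq> v \<and> (R {w,u})\<^sup>*\<^sup>* w x)"
    proof (induction rule: rtranclp_induct)
      case base then show ?case by simp
    next
      case (step y z)
      from step(3) show ?case
      proof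
        assume "y = u"
        then show ?thesis using step(2) by auto
      next
        assume "\<exists>w. E u w \<and> w \<noteq> v \<and> (R {w,u})\<^sup>*\<^sup>* w y"
        then obtain w where w: "E u w" "w \<noteq> v" "(R {w,u})\<^sup>*\<^sup>* w y" by blast
        show ?thesis
        proof (cases "{y, z} = {w, u}")
          case True
          show ?thesis
          proof (cases "y = u")
            case True
            then show ?thesis using step(2) by auto
          next
            case False
            then show ?thesis using \<open>{y, z} = {w, u}\<close> by (auto simp: doubleton_eq_iff)
          qed
        next
          case False
          then have "R {w,u} y z" using step(2) by simp
          then show ?thesis using w rtranclp.rtrancl_into_rtrancl[of "R {w,u}" w y z] by blast
        qed
      qed
    qed
    then show "x \<in> insert u (\<Union>w\<in>{w. E u w \<and> w \<noteq> v}. A w u)"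
      using xV unfolding A_def comp_minus_edge_def by auto
  qed
next
  show "insert u (\<Union>w\<in>{w. E u w \<and> w \<noteq> v}. A w u) \<subseteq> A u v"
  proof
    fix x assume "x \<in> insert u (\<Union>w\<in>{w. E u w \<and> w \<noteq> v}. A w u)"
    then consider "x = u" | w where "E u w" "w \<noteq> v" "x \<in> A w u" by auto
    then show "x \<in> A u v"
    proof cases
      case 1 then show ?thesis using u_in_A e by simp
    next
      case 2
      have xV: "x \<in> V" and p: "(R {w,u})\<^sup>*\<^sup>* w x" using 2(3) unfolding A_def comp_minus_edge_def by auto
      have "\<not> (R {w,u})\<^sup>*\<^sup>* w u" using sep symE 2(1) by blast
      then have "(R {u,v})\<^sup>*\<^sup>* w x" using change_edge[OF p] by blast
      moreover have "R {u,v} u w" using 2 by (auto simp: doubleton_eq_iff)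
      ultimately have "(R {u,v})\<^sup>*\<^sup>* u x" using converse_rtranclp_into_rtranclp[of "R {u,v}" u w x] by blast
      then show ?thesis using xV unfolding A_def comp_minus_edge_def by auto
    qed
  qed
qed

lemma u_notin_pieces: "E u w \<Longrightarrow> u \<notin> A w u"
  using v_notin_A symE by blast

lemma pieces_disj:
  assumes "E u w1" "E u w2" "w1 \<noteq> w2"
  shows "A w1 u \<inter> A w2 u = {}"
proof (rule ccontr)
  assume "A w1 u \<inter> A w2 u \<noteq> {}"
  then obtain x where p1: "(R {w1,u})\<^sup>*\<^sup>* w1 x" and p2: "(R {w2,u})\<^sup>*\<^sup>* w2 x"
    unfolding A_def comp_minus_edge_def by auto
  have "\<not> (R {w2,u})\<^sup>*\<^sup>* w2 u" using sep symE assms(2) by blast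
  then have "(R {w1,u})\<^sup>*\<^sup>* w2 x" using change_edge[OF p2] by blast
  then have "(R {w1,u})\<^sup>*\<^sup>* w1 w2" using p1 R_sym by (meson rtranclp_trans)
  moreover have "R {w1,u} w2 u" using assms symE by (auto simp: doubleton_eq_iff)
  ultimately have "(R {w1,u})\<^sup>*\<^sup>* w1 u" using rtranclp.rtrancl_into_rtrancl[of "R {w1,u}" w1 w2 u] by blast
  then show False using sep symE assms(1) by blast
qed

lemma piece_smaller:
  assumes "E u v" "E u w" "w \<noteq> v"
  shows "card (A w u) < card (A u v)"
proof -
  have "A w u \<subseteq> A u v" using decomp[OF assms(1)] assms by auto
  moreover have "u \<in> A u v" "u \<notin> A w u" using u_in_A assms(1) u_notin_pieces assms(2) by auto
  ultimately have "A w u \<subset> A u v" by blast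
  then show ?thesis using psubset_card_mono[OF A_fin] by blast
qed

definition \<delta> :: "('a \<Rightarrow> nat) \<Rightarrow> ('a \<Rightarrow> nat) \<Rightarrow> 'a \<Rightarrow> int" where
  "\<delta> ft f x = (if f x = 1 then 1 else 0) - (if ft x = 1 then 1 else 0)"

definition X where "X ft f S = (\<Sum>x\<in>S. \<delta> ft f x)"

lemma X_ones: "finite S \<Longrightarrow> X ft f S = int (ones_in f S) - int (ones_in ft S)"
proof -
  assume fin: "finite S"
  have "X ft f S = (\<Sum>x\<in>S. if f x = 1 then 1 else 0) - (\<Sum>x\<in>S. if ft x = 1 then (1::int) else 0)"
    unfolding X_def \<delta>_def by (rule sum_subtractf)
  then show ?thesis using card_sum[OF fin, of "\<lambda>x. f x = 1"] card_sum[OF fin, of "\<lambda>x. ft x = 1"]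
    unfolding ones_in_def by simp
qed

lemma X_decomp:
  assumes e: "E u v"
  shows "X ft f (A u v) = \<delta> ft f u + (\<Sum>w\<in>{w. E u w \<and> w \<noteq> v}. X ft f (A w u))"
proof -
  let ?W = "{w. E u w \<and> w \<noteq> v}"
  have "?W \<subseteq> V" using inV by blast
  then have fW: "finite ?W" using finV finite_subset by blast
  have nu: "u \<notin> (\<Union>w\<in>?W. A w u)" using u_notin_pieces by auto
  have fU: "finite (\<Union>w\<in>?W. A w u)" using fW A_fin by auto
  have s1: "X ft f (A u v) = sum (\<delta> ft f) (insert u (\<Union>w\<in>?W. A w u))"
    unfolding X_def using decomp[OF e] by (rule arg_cong)
  have s2: "sum (\<delta> ft f) (insert u (\<Union>w\<in>?W. A w u)) = \<delta> ft f u + sum (\<delta> ft f) (\<Union>w\<in>?W. A w u)"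
    by (rule sum.insert[OF fU nu])
  have s3: "sum (\<delta> ft f) (\<Union>w\<in>?W. A w u) = (\<Sum>w\<in>?W. X ft f (A w u))"
    unfolding X_def
  proof (rule sum.UNION_disjoint[OF fW])
    show "\<forall>i\<in>?W. finite (A i u)" using A_fin by blast
    show "\<forall>i\<in>?W. \<forall>j\<in>?W. i \<noteq> j \<longrightarrow> A i u \<inter> A j u = {}" using pieces_disj by blast
  qed
  show ?thesis using s1 s2 s3 by simp
qed

lemma X_anti:
  assumes e: "E u v" and tot: "ones_in f V = ones_in ft V"
  shows "X ft f (A v u) = - X ft f (A u v)"
proof -
  have "X ft f V = 0" using X_ones[OF finV] tot by simp
  moreover have "X ft f V = X ft f (A u v) + X ft f (A v u)"
    unfolding X_def using sum.union_disjoint[OF A_fin A_fin A_disj[OF e], of "\<delta> ft f"] A_union[OF e]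
    by simp
  ultimately show ?thesis by simp
qed

lemma swap_vals:
  assumes "u \<noteq> v" "f u = 1" "f v = 2"
  shows "swap_tokens f u v u = 2" "swap_tokens f u v v = 1"
    "x \<noteq> u \<Longrightarrow> x \<noteq> v \<Longrightarrow> swap_tokens f u v x = f x"
  using assms unfolding swap_tokens_def by auto

lemma ones_swap_same:
  assumes uv: "u \<noteq> v" "f u = 1" "f v = 2" and fin: "finite S" and iff: "u \<in> S \<longleftrightarrow> v \<in> S"
  shows "ones_in (swap_tokens f u v) S = ones_in f S"
proof (cases "u \<in> S")
  case True
  let ?B = "{x\<in>S. f x = 1}"
  have "{x\<in>S. swap_tokens f u v x = 1} = insert v (?B - {u})"
    using True iff swap_vals[OF uv] uv by (auto simp: swap_tokens_def)
  moreover have "v \<notin> ?B - {u}" using uv by auto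
  moreover have "u \<in> ?B" using True uv by auto
  moreover have "finite ?B" using fin by simp
  ultimately show ?thesis unfolding ones_in_def
    using card.remove[of ?B u] by simp
next
  case False
  then have "{x\<in>S. swap_tokens f u v x = 1} = {x\<in>S. f x = 1}"
    using iff uv by (auto simp: swap_tokens_def)
  then show ?thesis unfolding ones_in_def by simp
qed

lemma ones_swap_out:
  assumes uv: "u \<noteq> v" "f u = 1" "f v = 2" and fin: "finite S" and "u \<in> S" "v \<notin> S"
  shows "int (ones_in (swap_tokens f u v) S) = int (ones_in f S) - 1"
proof -
  let ?B = "{x\<in>S. f x = 1}"
  have "{x\<in>S. swap_tokens f u v x = 1} = ?B - {u}"
    using assms by (auto simp: swap_tokens_def)
  moreover have "u \<in> ?B" using assms by auto
  moreover have "finite ?B" using fin by simp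
  ultimately show ?thesis unfolding ones_in_def
    using card.remove[of ?B u] by simp
qed

lemma ones_swap_in:
  assumes uv: "u \<noteq> v" "f u = 1" "f v = 2" and fin: "finite S" and "v \<in> S" "u \<notin> S"
  shows "int (ones_in (swap_tokens f u v) S) = int (ones_in f S) + 1"
proof -
  let ?B = "{x\<in>S. f x = 1}"
  have "{x\<in>S. swap_tokens f u v x = 1} = insert v ?B"
    using assms by (auto simp: swap_tokens_def)
  moreover have "v \<notin> ?B" using assms by auto
  moreover have "finite ?B" using fin by simp
  ultimately show ?thesis unfolding ones_in_def by simp
qed

lemma cme_fin: "finite (comp_minus_edge V E e x)"
  unfolding comp_minus_edge_def using finV by simp

lemma diff_other:
  assumes uv: "E u v" "f u = 1" "f v = 2" and ne: "{u, v} \<noteq> e"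
  shows "diff_edge V E ft (swap_tokens f u v) e = diff_edge V E ft f e"
proof -
  have "u \<noteq> v" using uv irr by blast
  then show ?thesis unfolding diff_edge_def Let_def
    using ones_swap_same[OF _ uv(2,3) cme_fin closure[OF uv(1) ne]] by simp
qed

lemma main:
  assumes tp: "token_placement V f" and tot: "ones_in f V = ones_in ft V"
    and D: "D_val V E ft f \<noteq> 0"
  shows "\<exists>u v. E u v \<and> D_val V E ft (swap_tokens f u v) = D_val V E ft f - 1"
proof -
  obtain e where e: "e \<in> edges E" "diff_edge V E ft f e \<noteq> 0"
    using D unfolding D_val_def by (meson sum.neutral)
  then obtain a b where ab: "E a b" "e = {a, b}" unfolding edges_def by blast
  define x where "x = (SOME x. x \<in> e)"
  have "x \<in> e" unfolding x_def using ab by (metis insertI1 someI)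
  then have xab: "x = a \<or> x = b" using ab by auto
  have de: "diff_edge V E ft f e = \<bar>X ft f (comp_minus_edge V E e x)\<bar>"
    unfolding diff_edge_def Let_def x_def[symmetric] using X_ones[OF cme_fin] by simp
  have "X ft f (A a b) \<noteq> 0"
  proof (cases "x = a")
    case True
    then show ?thesis using e(2) de ab unfolding A_def by simp
  next
    case False
    then have "x = b" using xab by simp
    then have "X ft f (A b a) \<noteq> 0" using e(2) de ab A_swap_eq by simp
    then show ?thesis using X_anti[OF ab(1) tot] by simp
  qed
  then have "\<exists>q. E (fst q) (snd q) \<and> X ft f (A (fst q) (snd q)) > 0"
  proof (cases "X ft f (A a b) > 0")
    case True then show ?thesis using ab by (intro exI[of _ "(a,b)"]) simp
  next
    case False
    then have "X ft f (A b a) > 0" using X_anti[OF ab(1) tot] \<open>X ft f (A a b) \<noteq> 0\<close> by simp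
    then show ?thesis using symE[OF ab(1)] by (intro exI[of _ "(b,a)"]) simp
  qed
  then obtain q where q: "E (fst q) (snd q) \<and> X ft f (A (fst q) (snd q)) > 0"
    and qmin: "\<forall>q'. E (fst q') (snd q') \<and> X ft f (A (fst q') (snd q')) > 0
       \<longrightarrow> card (A (fst q) (snd q)) \<le> card (A (fst q') (snd q'))"
  proof -
    from \<open>\<exists>q. E (fst q) (snd q) \<and> X ft f (A (fst q) (snd q)) > 0\<close> obtain k where
      "E (fst k) (snd k) \<and> X ft f (A (fst k) (snd k)) > 0" by blast
    from ex_has_least_nat[of "\<lambda>q. E (fst q) (snd q) \<and> X ft f (A (fst q) (snd q)) > 0", OF this,
       of "\<lambda>q. card (A (fst q) (snd q))"] show ?thesis using that by blast
  qed
  obtain u0 v0 where q0: "q = (u0, v0)" by (cases q)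
  have e0: "E u0 v0" and pos0: "X ft f (A u0 v0) > 0" using q q0 by auto
  have nonpos: "X ft f (A w u0) \<le> 0" if "w \<in> {w. E u0 w \<and> w \<noteq> v0}" for w
  proof (rule ccontr)
    assume "\<not> ?thesis"
    then have "E (fst (w,u0)) (snd (w,u0)) \<and> X ft f (A (fst (w,u0)) (snd (w,u0))) > 0"
      using that symE by auto
    then have "card (A u0 v0) \<le> card (A w u0)" using qmin q0 by fastforce
    moreover have "card (A w u0) < card (A u0 v0)" using piece_smaller[OF e0] that by auto
    ultimately show False by simp
  qed
  have "(\<Sum>w\<in>{w. E u0 w \<and> w \<noteq> v0}. X ft f (A w u0)) \<le> 0"
    using nonpos by (rule sum_nonpos)
  then have "\<delta> ft f u0 > 0" using X_decomp[OF e0, of ft f] pos0 by simp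
  then have "f u0 = 1" unfolding \<delta>_def by (auto split: if_splits)
  then have "\<exists>q. E (fst q) (snd q) \<and> X ft f (A (fst q) (snd q)) > 0 \<and> f (fst q) = 1"
    using e0 pos0 by (intro exI[of _ "(u0,v0)"]) simp
  then obtain p where p: "E (fst p) (snd p) \<and> X ft f (A (fst p) (snd p)) > 0 \<and> f (fst p) = 1"
    and pmin: "\<forall>p'. E (fst p') (snd p') \<and> X ft f (A (fst p') (snd p')) > 0 \<and> f (fst p') = 1
       \<longrightarrow> card (A (snd p) (fst p)) \<le> card (A (snd p') (fst p'))"
  proof -
    from \<open>\<exists>q. E (fst q) (snd q) \<and> X ft f (A (fst q) (snd q)) > 0 \<and> f (fst q) = 1\<close> obtain k where
      "E (fst k) (snd k) \<and> X ft f (A (fst k) (snd k)) > 0 \<and> f (fst k) = 1" by blast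
    from ex_has_least_nat[of "\<lambda>q. E (fst q) (snd q) \<and> X ft f (A (fst q) (snd q)) > 0 \<and> f (fst q) = 1", OF this,
       of "\<lambda>q. card (A (snd q) (fst q))"] show ?thesis using that by blast
  qed
  obtain u v where p0: "p = (u, v)" by (cases p)
  have euv: "E u v" and posuv: "X ft f (A u v) > 0" and fu: "f u = 1" using p p0 by auto
  have evu: "E v u" using symE euv by blast
  have uv: "u \<noteq> v" using euv irr by blast
  have fv: "f v = 2"
  proof (rule ccontr)
    assume "f v \<noteq> 2"
    moreover have "f v \<in> {1,2}" using tp inV[OF euv] unfolding token_placement_def by blast
    ultimately have fv1: "f v = 1" by simp
    have "\<delta> ft f v \<ge> 0" unfolding \<delta>_def using fv1 by simp
    moreover have "X ft f (A v u) < 0" using X_anti[OF euv tot] posuv by simp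
    ultimately have "(\<Sum>w\<in>{w. E v w \<and> w \<noteq> u}. X ft f (A w v)) < 0"
      using X_decomp[OF evu, of ft f] by simp
    then obtain w where w: "w \<in> {w. E v w \<and> w \<noteq> u}" "X ft f (A w v) < 0"
      by (metis (no_types, lifting) not_less sum_nonneg)
    have ewv: "E w v" using w symE by auto
    have "X ft f (A v w) > 0" using X_anti[OF ewv tot] w(2) by simp
    then have "E (fst (v,w)) (snd (v,w)) \<and> X ft f (A (fst (v,w)) (snd (v,w))) > 0 \<and> f (fst (v,w)) = 1"
      using w fv1 by simp
    then have "card (A v u) \<le> card (A w v)" using pmin p0 by fastforce
    moreover have "card (A w v) < card (A v u)" using piece_smaller[OF evu] w by auto
    ultimately show False by simp
  qed
  let ?g = "swap_tokens f u v"
  have dedge: "diff_edge V E ft ?g {u,v} = diff_edge V E ft f {u,v} - 1"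
  proof -
    define y where "y = (SOME x. x \<in> {u,v})"
    have "y \<in> {u,v}" unfolding y_def by (metis insertI1 someI)
    then have yuv: "y = u \<or> y = v" by auto
    have dd: "diff_edge V E ft h {u,v} = \<bar>X ft h (comp_minus_edge V E {u,v} y)\<bar>" for h
      unfolding diff_edge_def Let_def y_def[symmetric] using X_ones[OF cme_fin] by simp
    show ?thesis
    proof (cases "y = u")
      case True
      then have S: "comp_minus_edge V E {u,v} y = A u v" unfolding A_def by simp
      have "X ft ?g (A u v) = X ft f (A u v) - 1"
        using X_ones[OF A_fin] ones_swap_out[OF uv fu fv A_fin u_in_A[OF euv] v_notin_A[OF euv]] by simp
      then show ?thesis using dd S posuv by simp
    next
      case False
      then have S: "comp_minus_edge V E {u,v} y = A v u" using yuv A_swap_eq by simp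
      have "X ft ?g (A v u) = X ft f (A v u) + 1"
        using X_ones[OF A_fin] ones_swap_in[OF uv fu fv A_fin u_in_A[OF evu] v_notin_A[OF evu]] by simp
      moreover have "X ft f (A v u) < 0" using X_anti[OF euv tot] posuv by simp
      ultimately show ?thesis using dd S by simp
    qed
  qed
  have fedges: "finite (edges E)"
  proof -
    have "edges E \<subseteq> Pow V" unfolding edges_def using inV by blast
    then show ?thesis using finV by (meson finite_Pow_iff finite_subset)
  qed
  have uvE: "{u,v} \<in> edges E" unfolding edges_def using euv by blast
  have c1: "D_val V E ft ?g = diff_edge V E ft ?g {u,v} + (\<Sum>e\<in>edges E - {{u,v}}. diff_edge V E ft ?g e)"
    unfolding D_val_def by (rule sum.remove[OF fedges uvE])
  have c2: "(\<Sum>e\<in>edges E - {{u,v}}. diff_edge V E ft ?g e) = (\<Sum>e\<in>edges E - {{u,v}}. diff_edge V E ft f e)"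
    by (rule sum.cong) (auto intro: diff_other[OF euv fu fv])
  have c3: "diff_edge V E ft f {u,v} + (\<Sum>e\<in>edges E - {{u,v}}. diff_edge V E ft f e) = D_val V E ft f"
    unfolding D_val_def by (rule sum.remove[OF fedges uvE, symmetric])
  have "D_val V E ft ?g = D_val V E ft f - 1" using c1 c2 c3 dedge by simp
  then show ?thesis using euv by blast
qed

end

theorem mainTheorem8:
  fixes V :: "'a set" and E :: "'a \<Rightarrow> 'a \<Rightarrow> bool" and ft f :: "'a \<Rightarrow> nat"
  assumes "is_tree V E"
    and "token_placement V ft"
    and "token_placement V f"
    and "ones_in f V = ones_in ft V"
    and "D_val V E ft f \<noteq> 0"
  shows "\<exists>u v. E u v \<and> D_val V E ft (swap_tokens f u v) = D_val V E ft f - 1"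
proof -
  interpret tc V E by unfold_locales (rule assms(1))
  show ?thesis using main assms(3,4,5) by blast
qed

end
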